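(* Let $d\ge 2$ and let ${\cal P}=\{\Pi_i,\frac{1}{d^2}\}_{i=1}^{d^2}$ be a symmetric informationally complete (SIC) ensemble on $\mathbb{C}^d$, i.e. $\Pi_i=|\psi_i\rangle\langle\psi_i|$ for unit vectors $\psi_i$ with $|\langle\psi_i|\psi_j\rangle|^2=\frac{1}{d+1}$ for all $i\ne j$, each with probability $1/d^2$. Then the accessible fidelity of ${\cal P}$ is $$F_{\cal P}=\frac{2}{d+1}.$$ Moreover, for any (finite) POVM ${\cal G}=\{G_b\}$ on $\mathbb{C}^d$ consisting of rank-one elements $G_b=g_b|\phi_b\rangle\langle\phi_b|$ ($g_b>0$, $\|\phi_b\|=1$), the achievable fidelity satisfies $F_{\cal P}({\cal G})=\frac{2}{d+1}=F_{\cal P}$, so any such POVM can be used in an optimal eavesdropping strategy.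
   Context: For a POVM ${\cal E}=\{E_b\}$ and a state-reproduction strategy ${\cal M}:b\mapsto\sigma_b$ (density operators), the average fidelity is $F_{\cal P}({\cal E},{\cal M})=\sum_{b,i}\pi_i\,{\rm tr}(\Pi_iE_b)\,{\rm tr}(\Pi_i\sigma_b)$ (here $\pi_i=1/d^2$). The achievable fidelity of ${\cal E}$ is $F_{\cal P}({\cal E})=\sup_{\cal M}F_{\cal P}({\cal E},{\cal M})$, and the accessible fidelity is $F_{\cal P}=\sup_{{\cal E},{\cal M}}F_{\cal P}({\cal E},{\cal M})$. *)

theory Defs
  imports "Jordan_Normal_Form.Matrix"
begin

definition cinner :: "complex vec \<Rightarrow> complex vec \<Rightarrow> complex" where
  "cinner u v = (\<Sum>i<dim_vec u. cnj (u $ i) * v $ i)"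

definition mtrace :: "complex mat \<Rightarrow> complex" where
  "mtrace A = (\<Sum>i<dim_row A. A $$ (i, i))"

definition ketbra :: "complex vec \<Rightarrow> complex mat" where
  "ketbra \<phi> = mat (dim_vec \<phi>) (dim_vec \<phi>) (\<lambda>(i, j). \<phi> $ i * cnj (\<phi> $ j))"

definition hermitian_mat :: "complex mat \<Rightarrow> bool" where
  "hermitian_mat A \<longleftrightarrow> (\<forall>i<dim_row A. \<forall>j<dim_col A. A $$ (i, j) = cnj (A $$ (j, i)))"

definition psd :: "nat \<Rightarrow> complex mat \<Rightarrow> bool" where
  "psd d A \<longleftrightarrow> A \<in> carrier_mat d d \<and> hermitian_mat A \<and>
     (\<forall>v. dim_vec v = d \<longrightarrow> Re (cinner v (A *\<^sub>v v)) \<ge> 0)"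

definition density :: "nat \<Rightarrow> complex mat \<Rightarrow> bool" where
  "density d \<rho> \<longleftrightarrow> psd d \<rho> \<and> mtrace \<rho> = 1"

definition povm :: "nat \<Rightarrow> nat \<Rightarrow> (nat \<Rightarrow> complex mat) \<Rightarrow> bool" where
  "povm d n E \<longleftrightarrow> (\<forall>b<n. psd d (E b)) \<and>
     (\<forall>i<d. \<forall>j<d. (\<Sum>b<n. E b $$ (i, j)) = (1\<^sub>m d) $$ (i, j))"

definition rank_one_povm :: "nat \<Rightarrow> nat \<Rightarrow> (nat \<Rightarrow> complex mat) \<Rightarrow> bool" where
  "rank_one_povm d n G \<longleftrightarrow> povm d n G \<and>
     (\<forall>b<n. \<exists>g \<phi>. g > 0 \<and> dim_vec \<phi> = d \<and> cinner \<phi> \<phi> = 1 \<and>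
        G b = complex_of_real g \<cdot>\<^sub>m ketbra \<phi>)"

definition sic :: "nat \<Rightarrow> (nat \<Rightarrow> complex vec) \<Rightarrow> bool" where
  "sic d \<psi> \<longleftrightarrow> (\<forall>i<d^2. dim_vec (\<psi> i) = d \<and> cinner (\<psi> i) (\<psi> i) = 1) \<and>
     (\<forall>i<d^2. \<forall>j<d^2. i \<noteq> j \<longrightarrow> (cmod (cinner (\<psi> i) (\<psi> j)))\<^sup>2 = 1 / (real d + 1))"

definition avg_fidelity :: "nat \<Rightarrow> (nat \<Rightarrow> complex vec) \<Rightarrow> nat \<Rightarrow> (nat \<Rightarrow> complex mat)
    \<Rightarrow> (nat \<Rightarrow> complex mat) \<Rightarrow> real" where
  "avg_fidelity d \<psi> n E \<sigma> = Re (\<Sum>b<n. \<Sum>i<d^2. complex_of_real (1 / (real d)^2) *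
       mtrace (ketbra (\<psi> i) * E b) * mtrace (ketbra (\<psi> i) * \<sigma> b))"

definition achievable_fidelity :: "nat \<Rightarrow> (nat \<Rightarrow> complex vec) \<Rightarrow> nat \<Rightarrow> (nat \<Rightarrow> complex mat) \<Rightarrow> real" where
  "achievable_fidelity d \<psi> n E =
     Sup {avg_fidelity d \<psi> n E \<sigma> | \<sigma>. \<forall>b<n. density d (\<sigma> b)}"

definition accessible_fidelity :: "nat \<Rightarrow> (nat \<Rightarrow> complex vec) \<Rightarrow> real" where
  "accessible_fidelity d \<psi> =
     Sup {avg_fidelity d \<psi> n E \<sigma> | n E \<sigma>. povm d n E \<and> (\<forall>b<n. density d (\<sigma> b))}"

end

theory Submission
  imports Defs
begin


lemma sum_if_const: "(\<Sum>x\<in>A. if P then g x else 0) = (if P then sum g A else 0)"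
  by simp

lemma delta4:
  fixes f :: "nat \<Rightarrow> nat \<Rightarrow> nat \<Rightarrow> nat \<Rightarrow> complex"
  shows "(\<Sum>a<d. \<Sum>b<d. \<Sum>c<d. \<Sum>e<d. ((if a = c then 1 else 0) * (if b = e then 1 else 0)
      + (if a = e then 1 else 0) * (if b = c then 1 else 0)) * f a b c e)
    = (\<Sum>a<d. \<Sum>b<d. f a b a b) + (\<Sum>a<d. \<Sum>b<d. f a b b a)"
proof -
  have e: "((if a = c then 1 else 0) * (if b = e then 1 else 0)
      + (if a = e then 1 else 0) * (if b = c then 1 else 0)) * f a b c e
    = (if a = c then (if b = e then f a b c e else 0) else 0) + (if b = c then (if a = e then f a b c e else 0) else 0)" for a b c e
    by simp
  show ?thesis
    unfolding e sum.distrib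
    by (simp add: sum_if_const sum.delta sum.delta' cong: if_cong)
qed

lemma swap_out4:
  "(\<Sum>a\<in>A. \<Sum>b\<in>B. \<Sum>c\<in>C. \<Sum>e\<in>E. \<Sum>i\<in>I. f a b c e i) = (\<Sum>i\<in>I. \<Sum>a\<in>A. \<Sum>b\<in>B. \<Sum>c\<in>C. \<Sum>e\<in>E. f a b c e i)"
  by (simp add: sum.swap[of _ I])

lemma swap_out2:
  "(\<Sum>a\<in>A. \<Sum>b\<in>B. \<Sum>i\<in>I. f a b i) = (\<Sum>i\<in>I. \<Sum>a\<in>A. \<Sum>b\<in>B. f a b i)"
  by (simp add: sum.swap[of _ I])

lemma prod4:
  fixes f :: "'a \<Rightarrow> 'r::comm_semiring_1"
  shows "(\<Sum>a\<in>A. \<Sum>b\<in>B. \<Sum>c\<in>C. \<Sum>e\<in>E. f a * g b * h c * k e) = sum f A * sum g B * sum h C * sum k E"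
  by (simp only: sum_distrib_left[symmetric] sum_distrib_right[symmetric])

lemma prod2:
  fixes f :: "'a \<Rightarrow> 'r::comm_semiring_1"
  shows "(\<Sum>a\<in>A. \<Sum>b\<in>B. f a * g b) = sum f A * sum g B"
  by (simp add: sum_product)


lemma TT:
 fixes \<psi> :: "nat \<Rightarrow> complex vec" and N d :: nat
 shows "(\<Sum>a<d. \<Sum>b<d. \<Sum>c<d. \<Sum>e<d. (\<Sum>i<N. \<psi> i $ a * \<psi> i $ b * cnj (\<psi> i $ c) * cnj (\<psi> i $ e)) * cnj (\<Sum>j<N. \<psi> j $ a * \<psi> j $ b * cnj (\<psi> j $ c) * cnj (\<psi> j $ e)))
 = (\<Sum>i<N. \<Sum>j<N. (\<Sum>a<d. \<psi> i $ a * cnj (\<psi> j $ a))^2 * (\<Sum>c<d. cnj (\<psi> i $ c) * \<psi> j $ c)^2)"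
proof -
  have "(\<Sum>a<d. \<Sum>b<d. \<Sum>c<d. \<Sum>e<d. (\<Sum>i<N. \<psi> i $ a * \<psi> i $ b * cnj (\<psi> i $ c) * cnj (\<psi> i $ e)) * cnj (\<Sum>j<N. \<psi> j $ a * \<psi> j $ b * cnj (\<psi> j $ c) * cnj (\<psi> j $ e)))
    = (\<Sum>a<d. \<Sum>b<d. \<Sum>c<d. \<Sum>e<d. \<Sum>i<N. \<Sum>j<N. (\<psi> i $ a * \<psi> i $ b * cnj (\<psi> i $ c) * cnj (\<psi> i $ e)) * cnj (\<psi> j $ a * \<psi> j $ b * cnj (\<psi> j $ c) * cnj (\<psi> j $ e)))"
    by (simp only: cnj_sum sum_product)
  also have "\<dots> = (\<Sum>i<N. \<Sum>j<N. \<Sum>a<d. \<Sum>b<d. \<Sum>c<d. \<Sum>e<d. (\<psi> i $ a * \<psi> i $ b * cnj (\<psi> i $ c) * cnj (\<psi> i $ e)) * cnj (\<psi> j $ a * \<psi> j $ b * cnj (\<psi> j $ c) * cnj (\<psi> j $ e)))"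
    by (simp only: swap_out4[where A="{..<d}" and B="{..<d}" and C="{..<d}" and E="{..<d}" and I="{..<N}"])
  also have "\<dots> = (\<Sum>i<N. \<Sum>j<N. \<Sum>a<d. \<Sum>b<d. \<Sum>c<d. \<Sum>e<d. (\<psi> i $ a * cnj (\<psi> j $ a)) * (\<psi> i $ b * cnj (\<psi> j $ b)) * (cnj (\<psi> i $ c) * \<psi> j $ c) * (cnj (\<psi> i $ e) * \<psi> j $ e))"
    by (intro sum.cong refl) (simp add: ac_simps)
  also have "\<dots> = (\<Sum>i<N. \<Sum>j<N. (\<Sum>a<d. \<psi> i $ a * cnj (\<psi> j $ a)) * (\<Sum>a<d. \<psi> i $ a * cnj (\<psi> j $ a)) * (\<Sum>c<d. cnj (\<psi> i $ c) * \<psi> j $ c) * (\<Sum>c<d. cnj (\<psi> i $ c) * \<psi> j $ c))"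
    by (simp only: prod4)
  also have "\<dots> = (\<Sum>i<N. \<Sum>j<N. (\<Sum>a<d. \<psi> i $ a * cnj (\<psi> j $ a))^2 * (\<Sum>c<d. cnj (\<psi> i $ c) * \<psi> j $ c)^2)"
    by (simp only: power2_eq_square mult.assoc)
  finally show ?thesis .
qed



lemma ne1: "(of_nat d + 1 :: complex) \<noteq> 0"
  by (metis of_nat_Suc of_nat_eq_0_iff add.commute nat.distinct(1))

lemma arith_x:
  fixes x :: complex assumes "x + 1 \<noteq> 0"
  shows "x^2 * (1 + (x^2 - 1) * (1 / (x + 1))^2) - 4 * (x / (x + 1)) * x^2
     + (x / (x + 1))^2 * (2 * x^2 + 2 * x) = 0"
proof -
  have f: "x^2 - 1 = (x - 1) * (x + 1)" by (simp add: algebra_simps power2_eq_square)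
  have A: "(x^2 - 1) * (1 / (x + 1))^2 = (x - 1) / (x + 1)"
    unfolding f using assms by (simp add: power2_eq_square)
  have g: "2 * x^2 + 2 * x = 2 * x * (x + 1)" by (simp add: algebra_simps power2_eq_square)
  have B: "(x / (x + 1))^2 * (2 * x^2 + 2 * x) = 2 * x^3 / (x + 1)"
    unfolding g using assms by (simp add: power2_eq_square power3_eq_cube)
  have C: "x^2 * (1 + (x - 1) / (x + 1)) = 2 * x^3 / (x + 1)"
    using assms by (simp add: divide_simps) (simp add: algebra_simps power2_eq_square power3_eq_cube)
  have D: "4 * (x / (x + 1)) * x^2 = 4 * x^3 / (x + 1)"
    by (simp add: power2_eq_square power3_eq_cube)
  show ?thesis unfolding A B C D
    by (simp add: diff_divide_distrib[symmetric] add_divide_distrib[symmetric])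
qed

lemma arith_final:
  fixes d :: nat
  shows "of_nat (d^2) * (1 + (of_nat (d^2) - 1) * (complex_of_real (1 / (real d + 1)))^2)
     - 4 * (of_nat d / (of_nat d + 1)) * of_nat (d^2)
     + (of_nat d / (of_nat d + 1))^2 * (2 * of_nat (d^2) + 2 * of_nat d) = (0::complex)"
proof -
  have e: "complex_of_real (1 / (real d + 1)) = 1 / (of_nat d + 1)" by simp
  show ?thesis unfolding e using arith_x[OF ne1[of d]] by simp
qed

lemma sum4_zero:
  fixes R :: "nat\<Rightarrow>nat\<Rightarrow>nat\<Rightarrow>nat\<Rightarrow>real"
  assumes "\<And>a b c e. R a b c e \<ge> 0" "(\<Sum>a<d. \<Sum>b<d. \<Sum>c<d. \<Sum>e<d. R a b c e) = 0"
    "a<d" "b<d" "c<d" "e<d"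
  shows "R a b c e = 0"
  using assms by (simp add: sum_nonneg_eq_0_iff sum_nonneg)

lemma sum_offdiag:
  fixes f :: "nat \<Rightarrow> complex"
  assumes "i < N" "\<And>j. j < N \<Longrightarrow> j \<noteq> i \<Longrightarrow> f j = c" 
  shows "(\<Sum>j<N. f j) = f i + (of_nat N - 1) * c"
proof -
  have "(\<Sum>j<N. f j) = f i + (\<Sum>j\<in>{..<N} - {i}. f j)"
    using assms(1) by (simp add: sum.remove)
  also have "(\<Sum>j\<in>{..<N} - {i}. f j) = (\<Sum>j\<in>{..<N} - {i}. c)"
    using assms(2) by (intro sum.cong) auto
  also have "\<dots> = of_nat (N - 1) * c" using assms(1) by simp
  finally show ?thesis using assms(1) by (simp add: of_nat_diff)
qed



lemma reord2:
  fixes \<psi> :: "nat \<Rightarrow> complex vec"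
  shows "(\<Sum>a<d. \<Sum>b<d. \<Sum>i<N. \<psi> i $ a * \<psi> i $ b * cnj (\<psi> i $ a) * cnj (\<psi> i $ b))
    = (\<Sum>i<N. (\<Sum>a<d. \<psi> i $ a * cnj (\<psi> i $ a)) * (\<Sum>b<d. \<psi> i $ b * cnj (\<psi> i $ b)))"
  "(\<Sum>a<d. \<Sum>b<d. \<Sum>i<N. \<psi> i $ a * \<psi> i $ b * cnj (\<psi> i $ b) * cnj (\<psi> i $ a))
    = (\<Sum>i<N. (\<Sum>a<d. \<psi> i $ a * cnj (\<psi> i $ a)) * (\<Sum>b<d. \<psi> i $ b * cnj (\<psi> i $ b)))"
  unfolding swap_out2[where A="{..<d}" and B="{..<d}" and I="{..<N}"] prod2[symmetric] by (intro sum.cong refl; simp add: ac_simps)+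

lemma sic_facts:
  assumes "sic d \<psi>"
  shows "\<And>i. i < d^2 \<Longrightarrow> dim_vec (\<psi> i) = d"
    and "\<And>i. i < d^2 \<Longrightarrow> (\<Sum>a<d. \<psi> i $ a * cnj (\<psi> i $ a)) = 1"
    and "\<And>i j. i < d^2 \<Longrightarrow> j < d^2 \<Longrightarrow> i \<noteq> j \<Longrightarrow> (cmod (cinner (\<psi> i) (\<psi> j)))\<^sup>2 = 1 / (real d + 1)"
    and "\<And>i j. i < d^2 \<Longrightarrow> j < d^2 \<Longrightarrow> cinner (\<psi> i) (\<psi> j) = (\<Sum>c<d. cnj (\<psi> i $ c) * \<psi> j $ c)"
  using assms unfolding sic_def cinner_def by (auto simp: mult.commute)

lemma sic_tensor:
  assumes S: "sic d \<psi>" and abce: "a<d" "b<d" "c<d" "e<d"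
  shows "(\<Sum>i<d^2. \<psi> i $ a * \<psi> i $ b * cnj (\<psi> i $ c) * cnj (\<psi> i $ e))
    = (of_nat d / (of_nat d + 1)) * ((if a = c then 1 else 0) * (if b = e then 1 else 0)
      + (if a = e then 1 else 0) * (if b = c then 1 else 0))"
proof -
  define N where "N = d^2"
  define T where "T a b c e = (\<Sum>i<N. \<psi> i $ a * \<psi> i $ b * cnj (\<psi> i $ c) * cnj (\<psi> i $ e))" for a b c e
  define k :: complex where "k = of_nat d / (of_nat d + 1)"
  define Dl :: "nat\<Rightarrow>nat\<Rightarrow>nat\<Rightarrow>nat\<Rightarrow>complex" where "Dl a b c e = ((if a = c then 1 else 0) * (if b = e then 1 else 0)
      + (if a = e then 1 else 0) * (if b = c then 1 else 0))" for a b c e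
  define K where "K a b c e = k * Dl a b c e" for a b c e
  note F = sic_facts[OF S, folded N_def]
  have cK: "cnj (K a b c e) = K a b c e" for a b c e
    unfolding K_def Dl_def k_def by simp
  have w: "(\<Sum>a<d. \<psi> i $ a * cnj (\<psi> j $ a))^2 * (\<Sum>c<d. cnj (\<psi> i $ c) * \<psi> j $ c)^2
      = (of_real ((cmod (cinner (\<psi> i) (\<psi> j)))^2))^2" if "i < N" "j < N" for i j
  proof -
    have z: "(\<Sum>c<d. cnj (\<psi> i $ c) * \<psi> j $ c) = cinner (\<psi> i) (\<psi> j)" using F(4) that by simp
    have z2: "(\<Sum>a<d. \<psi> i $ a * cnj (\<psi> j $ a)) = cnj (cinner (\<psi> i) (\<psi> j))"
      unfolding z[symmetric] cnj_sum by (simp add: mult.commute)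
    show ?thesis unfolding z z2 complex_norm_square
      by (simp add: power2_eq_square mult.commute mult.left_commute)
  qed
  have rowsum: "(\<Sum>j<N. (of_real ((cmod (cinner (\<psi> i) (\<psi> j)))^2))^2)
      = 1 + (of_nat N - 1) * (complex_of_real (1 / (real d + 1)))^2" if "i < N" for i
  proof -
    have "cinner (\<psi> i) (\<psi> i) = 1" using F(2,4) that by (simp add: mult.commute)
    then show ?thesis
      by (subst sum_offdiag[OF that, where c = "(complex_of_real (1 / (real d + 1)))^2"])
         (auto simp: F(3) that)
  qed
  have TT': "(\<Sum>a<d. \<Sum>b<d. \<Sum>c<d. \<Sum>e<d. T a b c e * cnj (T a b c e))
      = of_nat N * (1 + (of_nat N - 1) * (complex_of_real (1 / (real d + 1)))^2)"
  proof -
    have inner: "(\<Sum>j<N. (\<Sum>a<d. \<psi> i $ a * cnj (\<psi> j $ a))^2 * (\<Sum>c<d. cnj (\<psi> i $ c) * \<psi> j $ c)^2)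
       = 1 + (of_nat N - 1) * (complex_of_real (1 / (real d + 1)))^2" if "i < N" for i
    proof -
      have "(\<Sum>j<N. (\<Sum>a<d. \<psi> i $ a * cnj (\<psi> j $ a))^2 * (\<Sum>c<d. cnj (\<psi> i $ c) * \<psi> j $ c)^2)
        = (\<Sum>j<N. (of_real ((cmod (cinner (\<psi> i) (\<psi> j)))^2))^2)"
        by (rule sum.cong[OF refl], rule w[OF that], simp)
      then show ?thesis using rowsum[OF that] by simp
    qed
    have "(\<Sum>i<N. \<Sum>j<N. (\<Sum>a<d. \<psi> i $ a * cnj (\<psi> j $ a))^2 * (\<Sum>c<d. cnj (\<psi> i $ c) * \<psi> j $ c)^2)
       = (\<Sum>i<N. 1 + (of_nat N - 1) * (complex_of_real (1 / (real d + 1)))^2)"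
      by (rule sum.cong[OF refl], rule inner, simp)
    then show ?thesis unfolding T_def TT by simp
  qed
  have KT: "(\<Sum>a<d. \<Sum>b<d. \<Sum>c<d. \<Sum>e<d. K a b c e * T a b c e) = k * (2 * of_nat N)"
  proof -
    have "(\<Sum>a<d. \<Sum>b<d. \<Sum>c<d. \<Sum>e<d. K a b c e * T a b c e)
       = k * (\<Sum>a<d. \<Sum>b<d. \<Sum>c<d. \<Sum>e<d. Dl a b c e * T a b c e)"
      unfolding K_def by (simp add: sum_distrib_left mult.assoc)
    also have "\<dots> = k * ((\<Sum>a<d. \<Sum>b<d. T a b a b) + (\<Sum>a<d. \<Sum>b<d. T a b b a))"
      unfolding Dl_def delta4 ..
    also have "\<dots> = k * (2 * of_nat N)"
      unfolding T_def reord2 by (simp add: F(2))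
    finally show ?thesis .
  qed
  have KK: "(\<Sum>a<d. \<Sum>b<d. \<Sum>c<d. \<Sum>e<d. K a b c e * cnj (K a b c e)) = k^2 * (2 * of_nat N + 2 * of_nat d)"
  proof -
    have "(\<Sum>a<d. \<Sum>b<d. \<Sum>c<d. \<Sum>e<d. K a b c e * cnj (K a b c e))
       = k^2 * (\<Sum>a<d. \<Sum>b<d. \<Sum>c<d. \<Sum>e<d. Dl a b c e * Dl a b c e)"
      unfolding cK unfolding K_def by (simp add: sum_distrib_left power2_eq_square ac_simps)
    also have "\<dots> = k^2 * ((\<Sum>a<d. \<Sum>b<d. Dl a b a b) + (\<Sum>a<d. \<Sum>b<d. Dl a b b a))"
      unfolding Dl_def delta4 ..
    also have "(\<Sum>a<d. \<Sum>b<d. Dl a b a b) = (\<Sum>a<d. \<Sum>b<d. 1 + (if a = b then 1 else 0))"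
      unfolding Dl_def by (intro sum.cong) auto
    also have "(\<Sum>a<d. \<Sum>b<d. Dl a b b a) = (\<Sum>a<d. \<Sum>b<d. 1 + (if a = b then 1 else 0))"
      unfolding Dl_def by (intro sum.cong) auto
    also have "(\<Sum>a<d. \<Sum>b<d. 1 + (if a = b then 1 else 0)) = (of_nat N + of_nat d :: complex)"
      by (simp add: sum.distrib N_def power2_eq_square algebra_simps)
    finally show ?thesis by (simp add: algebra_simps)
  qed
  have sumz: "(\<Sum>a<d. \<Sum>b<d. \<Sum>c<d. \<Sum>e<d. (T a b c e - K a b c e) * cnj (T a b c e - K a b c e)) = 0"
  proof -
    have "(\<Sum>a<d. \<Sum>b<d. \<Sum>c<d. \<Sum>e<d. (T a b c e - K a b c e) * cnj (T a b c e - K a b c e))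
      = (\<Sum>a<d. \<Sum>b<d. \<Sum>c<d. \<Sum>e<d. T a b c e * cnj (T a b c e))
        - (\<Sum>a<d. \<Sum>b<d. \<Sum>c<d. \<Sum>e<d. K a b c e * T a b c e)
        - cnj (\<Sum>a<d. \<Sum>b<d. \<Sum>c<d. \<Sum>e<d. K a b c e * T a b c e)
        + (\<Sum>a<d. \<Sum>b<d. \<Sum>c<d. \<Sum>e<d. K a b c e * cnj (K a b c e))"
      by (simp add: cnj_sum sum_subtractf[symmetric] sum.distrib[symmetric] cK algebra_simps)
    also have "\<dots> = 0" unfolding TT' KT KK k_def N_def
      using arith_final[of d] by (simp add: algebra_simps)
    finally show ?thesis .
  qed
  define R where "R a b c e = (cmod (T a b c e - K a b c e))^2" for a b c e
  have "complex_of_real (\<Sum>a<d. \<Sum>b<d. \<Sum>c<d. \<Sum>e<d. R a b c e) = 0"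
    unfolding R_def of_real_sum complex_norm_square by (rule sumz)
  then have "(\<Sum>a<d. \<Sum>b<d. \<Sum>c<d. \<Sum>e<d. R a b c e) = 0" by (simp only: of_real_eq_0_iff)
  then have "R a b c e = 0" by (rule sum4_zero[rotated]) (auto simp: R_def abce)
  then have "T a b c e = K a b c e" unfolding R_def by simp
  then show ?thesis unfolding T_def K_def Dl_def k_def N_def .
qed



lemma tr_ketbra:
  assumes "A \<in> carrier_mat d d" "dim_vec v = d"
  shows "mtrace (ketbra v * A) = (\<Sum>a<d. \<Sum>c<d. v$a * cnj (v$c) * A$$(c,a))"
  using assms by (simp add: mtrace_def ketbra_def scalar_prod_def atLeast0LessThan)

lemma tr_prod:
  assumes "A \<in> carrier_mat d d" "B \<in> carrier_mat d d"
  shows "mtrace (A * B) = (\<Sum>a<d. \<Sum>c<d. A$$(a,c) * B$$(c,a))"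
  using assms by (simp add: mtrace_def scalar_prod_def atLeast0LessThan)

lemma prod22:
  fixes f :: "'a \<Rightarrow> 'b \<Rightarrow> 'r::comm_semiring_1"
  shows "(\<Sum>a\<in>A. \<Sum>c\<in>C. f a c) * (\<Sum>b\<in>B. \<Sum>e\<in>E. g b e) = (\<Sum>a\<in>A. \<Sum>c\<in>C. \<Sum>b\<in>B. \<Sum>e\<in>E. f a c * g b e)"
  unfolding sum_distrib_right unfolding sum_distrib_left ..

lemma reord4:
  fixes \<psi> :: "nat \<Rightarrow> complex vec"
  shows "(\<Sum>i<N. (\<Sum>a<d. \<Sum>c<d. \<psi> i$a * cnj (\<psi> i$c) * A$$(c,a)) * (\<Sum>b<d. \<Sum>e<d. \<psi> i$b * cnj (\<psi> i$e) * B$$(e,b)))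
   = (\<Sum>a<d. \<Sum>b<d. \<Sum>c<d. \<Sum>e<d. A$$(c,a) * B$$(e,b) * (\<Sum>i<N. \<psi> i$a * \<psi> i$b * cnj (\<psi> i$c) * cnj (\<psi> i$e)))"
proof -
  have "(\<Sum>a<d. \<Sum>b<d. \<Sum>c<d. \<Sum>e<d. A$$(c,a) * B$$(e,b) * (\<Sum>i<N. \<psi> i$a * \<psi> i$b * cnj (\<psi> i$c) * cnj (\<psi> i$e)))
    = (\<Sum>a<d. \<Sum>b<d. \<Sum>c<d. \<Sum>e<d. \<Sum>i<N. A$$(c,a) * B$$(e,b) * (\<psi> i$a * \<psi> i$b * cnj (\<psi> i$c) * cnj (\<psi> i$e)))"
    by (simp only: sum_distrib_left)
  also have "\<dots> = (\<Sum>i<N. \<Sum>a<d. \<Sum>b<d. \<Sum>c<d. \<Sum>e<d. A$$(c,a) * B$$(e,b) * (\<psi> i$a * \<psi> i$b * cnj (\<psi> i$c) * cnj (\<psi> i$e)))"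
    by (simp only: swap_out4[where A="{..<d}" and B="{..<d}" and C="{..<d}" and E="{..<d}" and I="{..<N}"])
  also have "\<dots> = (\<Sum>i<N. \<Sum>a<d. \<Sum>c<d. \<Sum>b<d. \<Sum>e<d. A$$(c,a) * B$$(e,b) * (\<psi> i$a * \<psi> i$b * cnj (\<psi> i$c) * cnj (\<psi> i$e)))"
    by (rule sum.cong[OF refl], rule sum.cong[OF refl], rule sum.swap)
  also have "\<dots> = (\<Sum>i<N. \<Sum>a<d. \<Sum>c<d. \<Sum>b<d. \<Sum>e<d. (\<psi> i$a * cnj (\<psi> i$c) * A$$(c,a)) * (\<psi> i$b * cnj (\<psi> i$e) * B$$(e,b)))"
    by (intro sum.cong refl) (simp add: ac_simps)
  also have "\<dots> = (\<Sum>i<N. (\<Sum>a<d. \<Sum>c<d. \<psi> i$a * cnj (\<psi> i$c) * A$$(c,a)) * (\<Sum>b<d. \<Sum>e<d. \<psi> i$b * cnj (\<psi> i$e) * B$$(e,b)))"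
    by (simp only: prod22)
  finally show ?thesis by simp
qed

lemma sic_pair:
  assumes S: "sic d \<psi>" and A: "A \<in> carrier_mat d d" and B: "B \<in> carrier_mat d d"
  shows "(\<Sum>i<d^2. mtrace (ketbra (\<psi> i) * A) * mtrace (ketbra (\<psi> i) * B))
    = (of_nat d / (of_nat d + 1)) * (mtrace A * mtrace B + mtrace (A * B))"
proof -
  note F = sic_facts[OF S]
  define k :: complex where "k = of_nat d / (of_nat d + 1)"
  have "(\<Sum>i<d^2. mtrace (ketbra (\<psi> i) * A) * mtrace (ketbra (\<psi> i) * B))
    = (\<Sum>i<d^2. (\<Sum>a<d. \<Sum>c<d. \<psi> i$a * cnj (\<psi> i$c) * A$$(c,a)) * (\<Sum>b<d. \<Sum>e<d. \<psi> i$b * cnj (\<psi> i$e) * B$$(e,b)))"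
  proof (rule sum.cong[OF refl])
    fix x assume "x \<in> {..<d^2}"
    then have dim: "dim_vec (\<psi> x) = d" using F(1) by simp
    show "mtrace (ketbra (\<psi> x) * A) * mtrace (ketbra (\<psi> x) * B) = (\<Sum>a<d. \<Sum>c<d. \<psi> x$a * cnj (\<psi> x$c) * A$$(c,a)) * (\<Sum>b<d. \<Sum>e<d. \<psi> x$b * cnj (\<psi> x$e) * B$$(e,b))"
      by (simp only: tr_ketbra[OF A dim] tr_ketbra[OF B dim])
  qed
  also have "\<dots> = (\<Sum>a<d. \<Sum>b<d. \<Sum>c<d. \<Sum>e<d. A$$(c,a) * B$$(e,b) * (\<Sum>i<d^2. \<psi> i$a * \<psi> i$b * cnj (\<psi> i$c) * cnj (\<psi> i$e)))"
    by (rule reord4)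
  also have "\<dots> = (\<Sum>a<d. \<Sum>b<d. \<Sum>c<d. \<Sum>e<d. A$$(c,a) * B$$(e,b) * (k * ((if a = c then 1 else 0) * (if b = e then 1 else 0)
      + (if a = e then 1 else 0) * (if b = c then 1 else 0))))"
    unfolding k_def by (intro sum.cong refl) (simp add: sic_tensor[OF S])
  also have "\<dots> = k * (\<Sum>a<d. \<Sum>b<d. \<Sum>c<d. \<Sum>e<d. ((if a = c then 1 else 0) * (if b = e then 1 else 0)
      + (if a = e then 1 else 0) * (if b = c then 1 else 0)) * (A$$(c,a) * B$$(e,b)))"
    by (simp add: sum_distrib_left ac_simps)
  also have "\<dots> = k * ((\<Sum>a<d. \<Sum>b<d. A$$(a,a) * B$$(b,b)) + (\<Sum>a<d. \<Sum>b<d. A$$(b,a) * B$$(a,b)))"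
    by (simp only: delta4)
  also have "(\<Sum>a<d. \<Sum>b<d. A$$(a,a) * B$$(b,b)) = mtrace A * mtrace B"
    using A B by (simp add: mtrace_def sum_product)
  also have "(\<Sum>a<d. \<Sum>b<d. A$$(b,a) * B$$(a,b)) = mtrace (A * B)"
    unfolding tr_prod[OF A B] by (rule sum.swap)
  finally show ?thesis unfolding k_def .
qed



lemma mult_if0: "a * (if P then x else 0) = (if P then a * x else (0::complex))" by simp
lemma if0_mult: "(if P then x else 0) * a = (if P then x * a else (0::complex))" by simp
lemma cnj_if0: "cnj (if P then x else 0) = (if P then cnj x else 0)" by simp

lemma quad:
  assumes A: "A \<in> carrier_mat d d" and ij: "i < d" "j < d" "i \<noteq> j"
  shows "cinner (vec d (\<lambda>k. (if k = i then x else 0) + (if k = j then y else 0)))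
     (A *\<^sub>v vec d (\<lambda>k. (if k = i then x else 0) + (if k = j then y else 0)))
    = cnj x * (A$$(i,i) * x + A$$(i,j) * y) + cnj y * (A$$(j,i) * x + A$$(j,j) * y)"
proof -
  have mv: "A *\<^sub>v vec d (\<lambda>k. (if k = i then x else 0) + (if k = j then y else 0))
     = vec d (\<lambda>k. A$$(k,i) * x + A$$(k,j) * y)"
    using A ij by (intro eq_vecI) (simp_all add: scalar_prod_def atLeast0LessThan distrib_left sum.distrib mult_if0)
  show ?thesis unfolding mv cinner_def using ij
    by (simp add: cnj_if0 distrib_right sum.distrib if0_mult)
qed

lemma quad1:
  assumes A: "A \<in> carrier_mat d d" and i: "i < d"
  shows "cinner (vec d (\<lambda>k. if k = i then x else 0)) (A *\<^sub>v vec d (\<lambda>k. if k = i then x else 0))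
    = cnj x * (A$$(i,i) * x)"
proof -
  have mv: "A *\<^sub>v vec d (\<lambda>k. if k = i then x else 0) = vec d (\<lambda>k. A$$(k,i) * x)"
    using A i by (intro eq_vecI) (simp_all add: scalar_prod_def atLeast0LessThan mult_if0)
  show ?thesis unfolding mv cinner_def using i
    by (simp add: cnj_if0 if0_mult)
qed

lemma quad_real:
  fixes a b :: real and c :: complex
  assumes Q: "\<And>x y. 0 \<le> Re (cnj x * (of_real a * x + c * y) + cnj y * (cnj c * x + of_real b * y))"
    and a: "a \<ge> 0" and b: "b \<ge> 0"
  shows "(cmod c)^2 \<le> a * b"
proof -
  have cc: "(cmod c)^2 = (Re c)^2 + (Im c)^2" by (simp add: cmod_power2)
  consider "b > 0" | "a > 0" | "a = 0" "b = 0" using a b by linarith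
  then show ?thesis
  proof cases
    case 1
    have "0 \<le> Re (cnj (of_real b) * (of_real a * of_real b + c * (- cnj c)) + cnj (- cnj c) * (cnj c * of_real b + of_real b * (- cnj c)))"
      by (rule Q)
    then have "0 \<le> b * (a * b - ((Re c)^2 + (Im c)^2))"
      by (simp add: algebra_simps power2_eq_square)
    then show ?thesis using 1 cc by (simp add: zero_le_mult_iff)
  next
    case 2
    have "0 \<le> Re (cnj (- c) * (of_real a * (- c) + c * of_real a) + cnj (of_real a) * (cnj c * (- c) + of_real b * of_real a))"
      by (rule Q)
    then have "0 \<le> a * (a * b - ((Re c)^2 + (Im c)^2))"
      by (simp add: algebra_simps power2_eq_square)
    then show ?thesis using 2 cc by (simp add: zero_le_mult_iff)
  next
    case 3
    have "0 \<le> Re (cnj 1 * (of_real a * 1 + c * (- cnj c)) + cnj (- cnj c) * (cnj c * 1 + of_real b * (- cnj c)))"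
      by (rule Q)
    then have "0 \<le> - 2 * ((Re c)^2 + (Im c)^2)"
      unfolding 3 by (simp add: power2_eq_square)
    then show ?thesis using 3 cc by simp
  qed
qed

lemma psd_diag:
  assumes P: "psd d A" and i: "i < d"
  shows "A$$(i,i) = of_real (Re (A$$(i,i)))" "Re (A$$(i,i)) \<ge> 0"
proof -
  have A: "A \<in> carrier_mat d d" and H: "hermitian_mat A"
    and Q: "\<And>v. dim_vec v = d \<Longrightarrow> Re (cinner v (A *\<^sub>v v)) \<ge> 0"
    using P unfolding psd_def by auto
  have dr: "dim_row A = d" "dim_col A = d" using A by auto
  have "A$$(i,i) = cnj (A$$(i,i))" using H i unfolding hermitian_mat_def dr by blast
  then show "A$$(i,i) = of_real (Re (A$$(i,i)))" by (simp add: complex_eq_iff)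
  have "Re (cinner (vec d (\<lambda>k. if k = i then 1 else 0)) (A *\<^sub>v vec d (\<lambda>k. if k = i then 1 else 0))) \<ge> 0"
    by (rule Q) simp
  then show "Re (A$$(i,i)) \<ge> 0" unfolding quad1[OF A i] by simp
qed

lemma psd_off:
  assumes P: "psd d A" and ij: "i < d" "j < d"
  shows "(cmod (A$$(i,j)))^2 \<le> Re (A$$(i,i)) * Re (A$$(j,j))"
proof (cases "i = j")
  case True
  have e: "A$$(i,j) = of_real (Re (A$$(i,i)))" using psd_diag(1)[OF P ij(1)] True by simp
  show ?thesis unfolding e using True by (simp add: power2_eq_square)
next
  case False
  have A: "A \<in> carrier_mat d d" and H: "hermitian_mat A"
    and Q: "\<And>v. dim_vec v = d \<Longrightarrow> Re (cinner v (A *\<^sub>v v)) \<ge> 0"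
    using P unfolding psd_def by auto
  have dr: "dim_row A = d" "dim_col A = d" using A by auto
  have ji: "A$$(j,i) = cnj (A$$(i,j))" using H ij unfolding hermitian_mat_def dr by blast
  show ?thesis
  proof (rule quad_real)
    fix x y
    have "0 \<le> Re (cinner (vec d (\<lambda>k. (if k = i then x else 0) + (if k = j then y else 0)))
     (A *\<^sub>v vec d (\<lambda>k. (if k = i then x else 0) + (if k = j then y else 0))))"
      by (rule Q) simp
    then show "0 \<le> Re (cnj x * (of_real (Re (A$$(i,i))) * x + A$$(i,j) * y) + cnj y * (cnj (A$$(i,j)) * x + of_real (Re (A$$(j,j))) * y))"
      unfolding quad[OF A ij False] ji[symmetric] using psd_diag(1)[OF P ij(1)] psd_diag(1)[OF P ij(2)] by simp
  qed (use psd_diag(2)[OF P ij(1)] psd_diag(2)[OF P ij(2)] in auto)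
qed



lemma entry_bound:
  fixes e1 e2 s1 s2 :: real and x y :: complex
  assumes "(cmod x)^2 \<le> e1 * e2" "(cmod y)^2 \<le> s2 * s1"
    "e1 \<ge> 0" "e2 \<ge> 0" "s1 \<ge> 0" "s2 \<ge> 0"
  shows "cmod (x * y) \<le> (e1 * s2 + e2 * s1) / 2"
proof -
  have "(cmod (x * y))^2 = (cmod x)^2 * (cmod y)^2" by (simp add: norm_mult power_mult_distrib)
  also have "\<dots> \<le> (e1 * e2) * (s2 * s1)"
    using assms by (intro mult_mono) auto
  also have "\<dots> \<le> ((e1 * s2 + e2 * s1) / 2)^2"
  proof -
    have "0 \<le> (e1 * s2 - e2 * s1)^2" by simp
    then show ?thesis by (simp add: power2_eq_square algebra_simps)
  qed
  finally show ?thesis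
    by (rule power2_le_imp_le) (use assms in simp)
qed

lemma tr_bound:
  assumes E: "psd d E" and S: "density d \<sigma>"
  shows "Re (mtrace (E * \<sigma>)) \<le> Re (mtrace E)"
proof -
  have Sp: "psd d \<sigma>" and tS: "mtrace \<sigma> = 1" using S unfolding density_def by auto
  have Ec: "E \<in> carrier_mat d d" using E unfolding psd_def by auto
  have Sc: "\<sigma> \<in> carrier_mat d d" using Sp unfolding psd_def by auto
  define e where "e a = Re (E$$(a,a))" for a
  define s where "s a = Re (\<sigma>$$(a,a))" for a
  have trE: "Re (mtrace E) = (\<Sum>a<d. e a)" using Ec unfolding mtrace_def e_def by (simp add: Re_sum)
  have trS: "(\<Sum>a<d. s a) = 1" using Sc tS unfolding mtrace_def s_def by (metis Re_sum carrier_matD(1) one_complex.sel(1))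
  have bnd: "cmod (E$$(a,c) * \<sigma>$$(c,a)) \<le> (e a * s c + e c * s a) / 2" if "a < d" "c < d" for a c
    unfolding e_def s_def
    by (rule entry_bound[OF psd_off[OF E that] psd_off[OF Sp that(2,1)]
          psd_diag(2)[OF E that(1)] psd_diag(2)[OF E that(2)] psd_diag(2)[OF Sp that(1)] psd_diag(2)[OF Sp that(2)]])
  have "Re (mtrace (E * \<sigma>)) = (\<Sum>a<d. \<Sum>c<d. Re (E$$(a,c) * \<sigma>$$(c,a)))"
    unfolding tr_prod[OF Ec Sc] by (simp add: Re_sum)
  also have "\<dots> \<le> (\<Sum>a<d. \<Sum>c<d. (e a * s c + e c * s a) / 2)"
    by (intro sum_mono) (meson bnd complex_Re_le_cmod order_trans lessThan_iff)
  also have "\<dots> = ((\<Sum>a<d. \<Sum>c<d. e a * s c) + (\<Sum>a<d. \<Sum>c<d. e c * s a)) / 2"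
    by (simp add: sum.distrib sum_divide_distrib add_divide_distrib)
  also have "(\<Sum>a<d. \<Sum>c<d. e c * s a) = (\<Sum>a<d. \<Sum>c<d. e a * s c)"
    by (rule sum.swap)
  also have "(\<Sum>a<d. \<Sum>c<d. e a * s c) = (\<Sum>a<d. e a) * (\<Sum>c<d. s c)"
    by (simp add: sum_product)
  finally show ?thesis using trE trS by simp
qed

lemma sum_tr:
  assumes P: "povm d n E"
  shows "(\<Sum>b<n. Re (mtrace (E b))) = real d"
proof -
  have Ec: "\<And>b. b < n \<Longrightarrow> E b \<in> carrier_mat d d" using P unfolding povm_def psd_def by auto
  have I: "\<And>a. a < d \<Longrightarrow> (\<Sum>b<n. E b $$ (a, a)) = 1" using P unfolding povm_def by auto
  have "(\<Sum>b<n. Re (mtrace (E b))) = (\<Sum>b<n. \<Sum>a<d. Re (E b $$ (a,a)))"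
    by (intro sum.cong refl) (simp add: mtrace_def Re_sum carrier_matD(1)[OF Ec])
  also have "\<dots> = (\<Sum>a<d. Re (\<Sum>b<n. E b $$ (a,a)))"
    by (subst sum.swap) (simp add: Re_sum)
  also have "\<dots> = (\<Sum>a<d. 1)" by (intro sum.cong refl) (simp add: I)
  finally show ?thesis by simp
qed

lemma avg_formula:
  assumes S: "sic d \<psi>" and d: "d \<ge> 1"
    and E: "\<And>b. b < n \<Longrightarrow> E b \<in> carrier_mat d d"
    and Sc: "\<And>b. b < n \<Longrightarrow> \<sigma> b \<in> carrier_mat d d"
    and St: "\<And>b. b < n \<Longrightarrow> mtrace (\<sigma> b) = 1"
  shows "avg_fidelity d \<psi> n E \<sigma> = (\<Sum>b<n. Re (mtrace (E b)) + Re (mtrace (E b * \<sigma> b))) / (real d * (real d + 1))"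
proof -
  have cst: "complex_of_real (1 / (real d)^2) * (of_nat d / (of_nat d + 1)) = complex_of_real (1 / (real d * (real d + 1)))"
  proof -
    have r: "(1 / (real d)^2) * (real d / (real d + 1)) = 1 / (real d * (real d + 1))"
      using d by (simp add: field_simps power2_eq_square)
    have k: "(of_nat d / (of_nat d + 1) :: complex) = of_real (real d / (real d + 1))" by simp
    show ?thesis unfolding k of_real_mult[symmetric] r ..
  qed
  have each: "(\<Sum>i<d^2. complex_of_real (1 / (real d)^2) * mtrace (ketbra (\<psi> i) * E b) * mtrace (ketbra (\<psi> i) * \<sigma> b))
     = complex_of_real (1 / (real d * (real d + 1))) * (mtrace (E b) + mtrace (E b * \<sigma> b))" if "b < n" for b
  proof -
    have "(\<Sum>i<d^2. complex_of_real (1 / (real d)^2) * mtrace (ketbra (\<psi> i) * E b) * mtrace (ketbra (\<psi> i) * \<sigma> b))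
      = complex_of_real (1 / (real d)^2) * (\<Sum>i<d^2. mtrace (ketbra (\<psi> i) * E b) * mtrace (ketbra (\<psi> i) * \<sigma> b))"
      by (simp add: sum_distrib_left mult.assoc)
    also have "\<dots> = complex_of_real (1 / (real d)^2) * ((of_nat d / (of_nat d + 1)) * (mtrace (E b) + mtrace (E b * \<sigma> b)))"
      unfolding sic_pair[OF S E[OF that] Sc[OF that]] St[OF that] by simp
    also have "\<dots> = complex_of_real (1 / (real d * (real d + 1))) * (mtrace (E b) + mtrace (E b * \<sigma> b))"
      unfolding cst[symmetric] by (simp only: mult.assoc)
    finally show ?thesis .
  qed
  have "avg_fidelity d \<psi> n E \<sigma> = Re (\<Sum>b<n. complex_of_real (1 / (real d * (real d + 1))) * (mtrace (E b) + mtrace (E b * \<sigma> b)))"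
  proof -
    have sumeq: "(\<Sum>b<n. \<Sum>i<d^2. complex_of_real (1 / (real d)^2) * mtrace (ketbra (\<psi> i) * E b) * mtrace (ketbra (\<psi> i) * \<sigma> b))
      = (\<Sum>b<n. complex_of_real (1 / (real d * (real d + 1))) * (mtrace (E b) + mtrace (E b * \<sigma> b)))"
      by (rule sum.cong[OF refl], rule each, simp)
    show ?thesis unfolding avg_fidelity_def sumeq ..
  qed
  also have "\<dots> = (\<Sum>b<n. Re (mtrace (E b)) + Re (mtrace (E b * \<sigma> b))) / (real d * (real d + 1))"
    by (simp add: Re_sum sum_divide_distrib)
  finally show ?thesis .
qed



lemma unit_norm:
  assumes "dim_vec \<phi> = d" "cinner \<phi> \<phi> = 1"
  shows "(\<Sum>a<d. \<phi>$a * cnj (\<phi>$a)) = 1"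
  using assms unfolding cinner_def by (simp add: mult.commute)

lemma density_ketbra:
  assumes dim: "dim_vec \<phi> = d" and n: "cinner \<phi> \<phi> = 1"
  shows "density d (ketbra \<phi>)"
proof -
  have C: "ketbra \<phi> \<in> carrier_mat d d" using dim unfolding ketbra_def by simp
  have H: "hermitian_mat (ketbra \<phi>)" unfolding hermitian_mat_def ketbra_def by simp
  have Q: "Re (cinner v (ketbra \<phi> *\<^sub>v v)) \<ge> 0" if v: "dim_vec v = d" for v
  proof -
    define z where "z = (\<Sum>l<d. cnj (\<phi>$l) * v$l)"
    have mv: "ketbra \<phi> *\<^sub>v v = vec d (\<lambda>k. \<phi>$k * z)"
      using dim v unfolding ketbra_def z_def
      by (intro eq_vecI) (simp_all add: scalar_prod_def atLeast0LessThan sum_distrib_left ac_simps)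
    have "cinner v (ketbra \<phi> *\<^sub>v v) = (\<Sum>k<d. cnj (v$k) * \<phi>$k) * z"
      unfolding mv cinner_def using v by (simp add: sum_distrib_right mult.assoc)
    also have "(\<Sum>k<d. cnj (v$k) * \<phi>$k) = cnj z"
      unfolding z_def cnj_sum by (simp add: mult.commute)
    finally have "cinner v (ketbra \<phi> *\<^sub>v v) = cnj z * z" .
    moreover have "Re (cnj z * z) = (Re z)^2 + (Im z)^2" by (simp add: power2_eq_square)
    ultimately show ?thesis by simp
  qed
  have T: "mtrace (ketbra \<phi>) = 1"
    using unit_norm[OF dim n] dim unfolding mtrace_def ketbra_def by simp
  show ?thesis unfolding density_def psd_def using C H Q T by auto
qed

lemma rank1_tr:
  assumes dim: "dim_vec \<phi> = d" and n: "cinner \<phi> \<phi> = 1"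
    and G: "G = complex_of_real g \<cdot>\<^sub>m ketbra \<phi>"
  shows "Re (mtrace (G * ketbra \<phi>)) = g" "Re (mtrace G) = g"
proof -
  note u = unit_norm[OF dim n]
  have GC: "G \<in> carrier_mat d d" and KC: "ketbra \<phi> \<in> carrier_mat d d"
    using dim unfolding G ketbra_def by auto
  have "mtrace G = of_real g * (\<Sum>a<d. \<phi>$a * cnj (\<phi>$a))"
    using dim unfolding G mtrace_def ketbra_def by (simp add: sum_distrib_left ac_simps)
  then show "Re (mtrace G) = g" using u by simp
  have "mtrace (G * ketbra \<phi>) = (\<Sum>a<d. \<Sum>c<d. of_real g * ((\<phi>$a * cnj (\<phi>$a)) * (\<phi>$c * cnj (\<phi>$c))))"
    unfolding tr_prod[OF GC KC] using dim
    by (intro sum.cong refl) (simp add: G ketbra_def ac_simps)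
  also have "\<dots> = of_real g * ((\<Sum>a<d. \<phi>$a * cnj (\<phi>$a)) * (\<Sum>c<d. \<phi>$c * cnj (\<phi>$c)))"
    by (simp only: sum_distrib_left[symmetric] sum_distrib_right[symmetric])
  finally show "Re (mtrace (G * ketbra \<phi>)) = g" using u by simp
qed

lemma upper:
  assumes S: "sic d \<psi>" and d: "d \<ge> 1" and P: "povm d n E" and D: "\<forall>b<n. density d (\<sigma> b)"
  shows "avg_fidelity d \<psi> n E \<sigma> \<le> 2 / (real d + 1)"
proof -
  have Ep: "\<And>b. b < n \<Longrightarrow> psd d (E b)" using P unfolding povm_def by auto
  have Ec: "\<And>b. b < n \<Longrightarrow> E b \<in> carrier_mat d d" using Ep unfolding psd_def by auto
  have Sc: "\<And>b. b < n \<Longrightarrow> \<sigma> b \<in> carrier_mat d d" using D unfolding density_def psd_def by auto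
  have St: "\<And>b. b < n \<Longrightarrow> mtrace (\<sigma> b) = 1" using D unfolding density_def by auto
  have "(\<Sum>b<n. Re (mtrace (E b)) + Re (mtrace (E b * \<sigma> b))) \<le> (\<Sum>b<n. Re (mtrace (E b)) + Re (mtrace (E b)))"
    by (intro sum_mono add_left_mono tr_bound) (use Ep D in auto)
  also have "\<dots> = 2 * real d" unfolding sum.distrib sum_tr[OF P] by simp
  finally have "(\<Sum>b<n. Re (mtrace (E b)) + Re (mtrace (E b * \<sigma> b))) / (real d * (real d + 1)) \<le> 2 * real d / (real d * (real d + 1))"
    by (intro divide_right_mono) auto
  also have "\<dots> = 2 / (real d + 1)" using d by simp
  finally have "(\<Sum>b<n. Re (mtrace (E b)) + Re (mtrace (E b * \<sigma> b))) / (real d * (real d + 1)) \<le> 2 / (real d + 1)" .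
  moreover have "avg_fidelity d \<psi> n E \<sigma> = (\<Sum>b<n. Re (mtrace (E b)) + Re (mtrace (E b * \<sigma> b))) / (real d * (real d + 1))"
    by (rule avg_formula[OF S d Ec Sc St])
  ultimately show ?thesis by simp
qed

lemma achieve:
  assumes S: "sic d \<psi>" and d: "d \<ge> 1" and R: "rank_one_povm d n G"
  shows "\<exists>\<sigma>. (\<forall>b<n. density d (\<sigma> b)) \<and> avg_fidelity d \<psi> n G \<sigma> = 2 / (real d + 1)"
proof -
  have P: "povm d n G" using R unfolding rank_one_povm_def by auto
  have "\<forall>b. \<exists>g \<phi>. b < n \<longrightarrow> (g > 0 \<and> dim_vec \<phi> = d \<and> cinner \<phi> \<phi> = 1 \<and> G b = complex_of_real g \<cdot>\<^sub>m ketbra \<phi>)"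
    using R unfolding rank_one_povm_def by blast
  then obtain gf \<phi>f where H: "\<And>b. b < n \<Longrightarrow> gf b > 0 \<and> dim_vec (\<phi>f b) = d \<and> cinner (\<phi>f b) (\<phi>f b) = 1 \<and> G b = complex_of_real (gf b) \<cdot>\<^sub>m ketbra (\<phi>f b)"
    by metis
  define \<sigma> where "\<sigma> b = ketbra (\<phi>f b)" for b
  have D: "\<forall>b<n. density d (\<sigma> b)" unfolding \<sigma>_def using H density_ketbra by blast
  have Ep: "\<And>b. b < n \<Longrightarrow> psd d (G b)" using P unfolding povm_def by auto
  have Ec: "\<And>b. b < n \<Longrightarrow> G b \<in> carrier_mat d d" using Ep unfolding psd_def by auto
  have Sc: "\<And>b. b < n \<Longrightarrow> \<sigma> b \<in> carrier_mat d d" using D unfolding density_def psd_def by auto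
  have St: "\<And>b. b < n \<Longrightarrow> mtrace (\<sigma> b) = 1" using D unfolding density_def by auto
  have "(\<Sum>b<n. Re (mtrace (G b)) + Re (mtrace (G b * \<sigma> b))) = (\<Sum>b<n. Re (mtrace (G b)) + Re (mtrace (G b)))"
  proof (rule sum.cong[OF refl])
    fix b assume "b \<in> {..<n}"
    then have Hb: "dim_vec (\<phi>f b) = d" "cinner (\<phi>f b) (\<phi>f b) = 1" "G b = complex_of_real (gf b) \<cdot>\<^sub>m ketbra (\<phi>f b)"
      using H by auto
    show "Re (mtrace (G b)) + Re (mtrace (G b * \<sigma> b)) = Re (mtrace (G b)) + Re (mtrace (G b))"
      unfolding \<sigma>_def rank1_tr[OF Hb] ..
  qed
  also have "\<dots> = 2 * real d" unfolding sum.distrib sum_tr[OF P] by simp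
  finally have sx: "(\<Sum>b<n. Re (mtrace (G b)) + Re (mtrace (G b * \<sigma> b))) = 2 * real d" .
  have "avg_fidelity d \<psi> n G \<sigma> = (\<Sum>b<n. Re (mtrace (G b)) + Re (mtrace (G b * \<sigma> b))) / (real d * (real d + 1))"
    by (rule avg_formula[OF S d Ec Sc St])
  also have "\<dots> = 2 * real d / (real d * (real d + 1))" unfolding sx ..
  also have "\<dots> = 2 / (real d + 1)" using d by simp
  finally show ?thesis using D by blast
qed

lemma basis_povm:
  assumes d: "d \<ge> 1"
  shows "rank_one_povm d d (\<lambda>b. ketbra (unit_vec d b))"
proof -
  have u: "cinner (unit_vec d b) (unit_vec d b) = 1" if "b < d" for b
    using that unfolding cinner_def by (simp add: if_distrib cong: if_cong)
  have D: "density d (ketbra (unit_vec d b))" if "b < d" for b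
    by (rule density_ketbra) (simp_all add: u that)
  have sm: "(\<Sum>b<d. ketbra (unit_vec d b) $$ (i, j)) = 1\<^sub>m d $$ (i, j)" if "i < d" "j < d" for i j
  proof -
    have e: "ketbra (unit_vec d b) $$ (i, j) = (if i = j then (if b = i then 1 else 0) else 0)" if "b < d" for b
      using that \<open>i < d\<close> \<open>j < d\<close> unfolding ketbra_def by auto
    have "(\<Sum>b<d. ketbra (unit_vec d b) $$ (i, j)) = (\<Sum>b<d. (if i = j then (if b = i then 1 else 0) else 0))"
      by (rule sum.cong[OF refl]) (simp add: e)
    also have "\<dots> = 1\<^sub>m d $$ (i, j)" using that by (simp only: sum_if_const) simp
    finally show ?thesis .
  qed
  have G: "ketbra (unit_vec d b) = complex_of_real 1 \<cdot>\<^sub>m ketbra (unit_vec d b)" for b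
    by (intro eq_matI) auto
  have c1: "\<forall>b<d. psd d (ketbra (unit_vec d b))" using D unfolding density_def by blast
  have c2: "\<forall>i<d. \<forall>j<d. (\<Sum>b<d. ketbra (unit_vec d b) $$ (i, j)) = 1\<^sub>m d $$ (i, j)" using sm by blast
  have c3: "\<forall>b<d. \<exists>g \<phi>. g > 0 \<and> dim_vec \<phi> = d \<and> cinner \<phi> \<phi> = 1 \<and>
        ketbra (unit_vec d b) = complex_of_real g \<cdot>\<^sub>m ketbra \<phi>"
  proof (intro allI impI)
    fix b assume b: "b < d"
    show "\<exists>g \<phi>. g > 0 \<and> dim_vec \<phi> = d \<and> cinner \<phi> \<phi> = 1 \<and>
        ketbra (unit_vec d b) = complex_of_real g \<cdot>\<^sub>m ketbra \<phi>"
      by (rule exI[of _ 1], rule exI[of _ "unit_vec d b"]) (use u[OF b] G[of b] in simp)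
  qed
  show ?thesis unfolding rank_one_povm_def povm_def using c1 c2 c3 by blast
qed


theorem theorem3:
  fixes d :: nat and \<psi> :: "nat \<Rightarrow> complex vec"
  assumes "d \<ge> 2" and "sic d \<psi>"
  shows "accessible_fidelity d \<psi> = 2 / (real d + 1) \<and>
    (\<forall>n G. rank_one_povm d n G \<longrightarrow>
       achievable_fidelity d \<psi> n G = 2 / (real d + 1) \<and>
       achievable_fidelity d \<psi> n G = accessible_fidelity d \<psi>)"
proof -
  have d: "d \<ge> 1" using assms(1) by simp
  note S = assms(2)
  have B: "\<And>n E \<sigma>. povm d n E \<Longrightarrow> \<forall>b<n. density d (\<sigma> b) \<Longrightarrow> avg_fidelity d \<psi> n E \<sigma> \<le> 2 / (real d + 1)"
    using upper[OF S d] by blast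
  have acc: "accessible_fidelity d \<psi> = 2 / (real d + 1)"
    unfolding accessible_fidelity_def
  proof (rule cSup_eq_maximum)
    obtain \<sigma> where s1: "\<forall>b<d. density d (\<sigma> b)"
      and s2: "avg_fidelity d \<psi> d (\<lambda>b. ketbra (unit_vec d b)) \<sigma> = 2 / (real d + 1)"
      using achieve[OF S d basis_povm[OF d]] by blast
    have P: "povm d d (\<lambda>b. ketbra (unit_vec d b))" using basis_povm[OF d] unfolding rank_one_povm_def by blast
    show "2 / (real d + 1) \<in> {avg_fidelity d \<psi> n E \<sigma> | n E \<sigma>. povm d n E \<and> (\<forall>b<n. density d (\<sigma> b))}"
      unfolding mem_Collect_eq
      by (rule exI[of _ d], rule exI[of _ "\<lambda>b. ketbra (unit_vec d b)"], rule exI[of _ \<sigma>])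
         (use s1 s2 P in auto)
  next
    fix x assume "x \<in> {avg_fidelity d \<psi> n E \<sigma> | n E \<sigma>. povm d n E \<and> (\<forall>b<n. density d (\<sigma> b))}"
    then show "x \<le> 2 / (real d + 1)" using B by blast
  qed
  have ach: "achievable_fidelity d \<psi> n G = 2 / (real d + 1)" if R: "rank_one_povm d n G" for n G
    unfolding achievable_fidelity_def
  proof (rule cSup_eq_maximum)
    have P: "povm d n G" using R unfolding rank_one_povm_def by blast
    obtain \<sigma> where s1: "\<forall>b<n. density d (\<sigma> b)"
      and s2: "avg_fidelity d \<psi> n G \<sigma> = 2 / (real d + 1)"
      using achieve[OF S d R] by blast
    show "2 / (real d + 1) \<in> {avg_fidelity d \<psi> n G \<sigma> | \<sigma>. \<forall>b<n. density d (\<sigma> b)}"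
      unfolding mem_Collect_eq by (rule exI[of _ \<sigma>]) (use s1 s2 in auto)
    fix x assume "x \<in> {avg_fidelity d \<psi> n G \<sigma> | \<sigma>. \<forall>b<n. density d (\<sigma> b)}"
    then show "x \<le> 2 / (real d + 1)" using B[OF P] by blast
  qed
  show ?thesis using acc ach by simp
qed

end
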